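(* Let $k$ be a field, $A$ a $k$-algebra and $a_1,\ldots,a_m\in A$. If $\dim_kP_{\ge0}(a_1,\ldots,a_m)<\infty$, then the subspace $ka_1+\cdots+ka_m$ is algebraic of bounded degree, i.e. there is $D$ such that every element of $ka_1+\cdots+ka_m$ is a root of a nonzero polynomial in $k[t]$ of degree at most $D$.
   Context: Algebras are associative with unit. For nonnegative integers $i_1,\ldots,i_m$, $p_{i_1,\ldots,i_m}(x_1,\ldots,x_m)$ is the sum of all distinct noncommutative monomials with exactly $i_j$ occurrences of $x_j$ for each $j$ ($p_{0,\ldots,0}=1$); $p_{i_1,\ldots,i_m}(a_1,\ldots,a_m)$ is its evaluation at $x_j=a_j$. $P_n(a_1,\ldots,a_m)=\operatorname{span}_k\{p_{i_1,\ldots,i_m}(a_1,\ldots,a_m)\mid i_1+\cdots+i_m=n\}$ and $P_{\ge 0}(a_1,\ldots,a_m)=\sum_{n=0}^\infty P_n(a_1,\ldots,a_m)$. *)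

theory Defs
  imports "HOL-Computational_Algebra.Polynomial"
begin

text \<open>A k-algebra (associative, unital) over a field k is modelled as a ring type 'a
  together with a unital ring homomorphism phi from k into the centre of 'a;
  scalar multiplication is c . x = phi c * x.\<close>

definition is_k_algebra :: "('k::field \<Rightarrow> 'a::ring_1) \<Rightarrow> bool" where
  "is_k_algebra \<phi> \<longleftrightarrow>
     \<phi> 1 = 1 \<and> (\<forall>a b. \<phi> (a + b) = \<phi> a + \<phi> b) \<and> (\<forall>a b. \<phi> (a * b) = \<phi> a * \<phi> b)
     \<and> (\<forall>c x. \<phi> c * x = x * \<phi> c)"

definition kspan :: "('k::field \<Rightarrow> 'a::ring_1) \<Rightarrow> 'a set \<Rightarrow> 'a set" where
  "kspan \<phi> S = {x. \<exists>F c. finite F \<and> F \<subseteq> S \<and> x = (\<Sum>s\<in>F. \<phi> (c s) * s)}"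

definition fin_dim :: "('k::field \<Rightarrow> 'a::ring_1) \<Rightarrow> 'a set \<Rightarrow> bool" where
  "fin_dim \<phi> V \<longleftrightarrow> (\<exists>B. finite B \<and> B \<subseteq> V \<and> V \<subseteq> kspan \<phi> B)"

text \<open>Evaluation of a noncommutative monomial (word over {0..<m}) at as.\<close>
definition eval_word :: "'a::ring_1 list \<Rightarrow> nat list \<Rightarrow> 'a" where
  "eval_word as w = prod_list (map (\<lambda>j. as ! j) w)"

text \<open>p_{i_1,...,i_m}(a_1,...,a_m): sum of all distinct words with exactly i_j occurrences
  of x_j, evaluated at as (m = length as = length is).\<close>
definition p_eval :: "'a::ring_1 list \<Rightarrow> nat list \<Rightarrow> 'a" where
  "p_eval as is = (\<Sum>w\<in>{w. set w \<subseteq> {..<length as} \<and> (\<forall>j<length as. count_list w j = is ! j)}.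
                     eval_word as w)"

definition P_n :: "('k::field \<Rightarrow> 'a::ring_1) \<Rightarrow> 'a list \<Rightarrow> nat \<Rightarrow> 'a set" where
  "P_n \<phi> as n = kspan \<phi> {p_eval as is | is. length is = length as \<and> sum_list is = n}"

text \<open>P_{>=0} = sum over n of the subspaces P_n = span of their union.\<close>
definition P_ge0 :: "('k::field \<Rightarrow> 'a::ring_1) \<Rightarrow> 'a list \<Rightarrow> 'a set" where
  "P_ge0 \<phi> as = kspan \<phi> (\<Union>n. P_n \<phi> as n)"

definition poly_eval_alg :: "('k::field \<Rightarrow> 'a::ring_1) \<Rightarrow> 'k poly \<Rightarrow> 'a \<Rightarrow> 'a" where
  "poly_eval_alg \<phi> q x = (\<Sum>i\<le>degree q. \<phi> (coeff q i) * x ^ i)"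

end

theory Submission
  imports Defs
begin

lemma len_counts: "set w \<subseteq> {..<(m::nat)} \<Longrightarrow> (\<Sum>j<m. count_list w j) = length w"
  using sum_count_set[of w "{..<m}"] by auto

lemma prod_counts:
  fixes d :: "nat \<Rightarrow> 'k::comm_monoid_mult"
  shows "set w \<subseteq> {..<(m::nat)} \<Longrightarrow> prod_list (map d w) = (\<Prod>j<m. d j ^ count_list w j)"
proof (induction w)
  case Nil then show ?case by simp
next
  case (Cons a w)
  have "(\<Prod>j<m. d j ^ count_list (a#w) j) = (\<Prod>j<m. d j ^ count_list w j * (if a = j then d j else 1))"
    by (rule prod.cong) (auto simp: mult.commute)
  also have "\<dots> = (\<Prod>j<m. d j ^ count_list w j) * d a"
    using Cons.prems by (simp add: prod.distrib)
  finally show ?case using Cons by (simp add: ac_simps)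
qed

locale kalg =
  fixes \<phi> :: "'k::field \<Rightarrow> 'a::ring_1"
  assumes alg: "is_k_algebra \<phi>"
begin

lemma phi1: "\<phi> 1 = 1" and phiadd: "\<phi> (a + b) = \<phi> a + \<phi> b"
  and phimult: "\<phi> (a * b) = \<phi> a * \<phi> b" and central: "\<phi> c * x = x * \<phi> c"
  using alg unfolding is_k_algebra_def by blast+

lemma phi0: "\<phi> 0 = 0"
  using phiadd[of 0 0] by simp

lemma phiuminus: "\<phi> (- a) = - \<phi> a"
  using phiadd[of a "-a"] phi0 by (simp add: eq_neg_iff_add_eq_0 add.commute)

sublocale V: vector_space "\<lambda>c x. \<phi> c * x"
  by unfold_locales (simp_all add: phiadd phimult distrib_left distrib_right mult.assoc phi1)

lemma kspan_eq: "kspan \<phi> S = V.span S"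
  unfolding kspan_def V.span_explicit by auto

lemma span_list: "x \<in> V.span (set as) \<Longrightarrow> \<exists>d. x = (\<Sum>j<length as. \<phi> (d j) * as ! j)"
proof (induction as arbitrary: x)
  case Nil
  then show ?case by simp
next
  case (Cons a as)
  then obtain k where "x - \<phi> k * a \<in> V.span (set as)"
    using V.span_breakdown_eq[of x a "set as"] by auto
  then obtain d where d: "x - \<phi> k * a = (\<Sum>j<length as. \<phi> (d j) * as ! j)" using Cons.IH by blast
  define d' where "d' = (\<lambda>j. case j of 0 \<Rightarrow> k | Suc i \<Rightarrow> d i)"
  have "(\<Sum>j<length (a#as). \<phi> (d' j) * (a#as) ! j) = \<phi> k * a + (\<Sum>j<length as. \<phi> (d j) * as ! j)"
    unfolding d'_def by (simp only: length_Cons sum.lessThan_Suc_shift) simp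
  also have "\<dots> = x" using d by (simp add: algebra_simps)
  finally show ?case by metis
qed


lemma eval_cons: "eval_word as (j#w) = as!j * eval_word as w"
  by (simp add: eval_word_def)

lemma term_id: "\<phi> c * a * (\<phi> p * e) = \<phi> (c * p) * (a * e)"
proof -
  have 1: "\<phi> c * a * (\<phi> p * e) = \<phi> c * ((a * \<phi> p) * e)" by (simp add: mult.assoc)
  have 2: "a * \<phi> p = \<phi> p * a" by (rule central[symmetric])
  show ?thesis unfolding 1 2 by (simp add: mult.assoc)
qed

lemma power_expand:
  "(\<Sum>j<length as. \<phi> (d j) * as!j) ^ n =
     (\<Sum>w\<in>{w. set w \<subseteq> {..<length as} \<and> length w = n}. \<phi> (prod_list (map d w)) * eval_word as w)"
proof (induction n)
  case 0
  have "{w. set w \<subseteq> {..<length as} \<and> length w = 0} = {[]}" by auto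
  then show ?case by (simp add: eval_word_def phi1)
next
  case (Suc n)
  define m where "m = length as"
  define W where "W n = {w. set w \<subseteq> {..<m} \<and> length w = n}" for n
  define g where "g w = \<phi> (prod_list (map d w)) * eval_word as w" for w
  have finW: "finite (W k)" for k unfolding W_def by (rule finite_lists_length_eq) simp
  have Ws: "W (Suc n) = (\<lambda>(j,w). j#w) ` ({..<m} \<times> W n)"
    unfolding W_def by (auto simp: length_Suc_conv image_iff)
  have inj: "inj_on (\<lambda>(j,w). j#w) ({..<m} \<times> W n)" by (auto simp: inj_on_def)
  have "(\<Sum>j<m. \<phi> (d j) * as!j) ^ Suc n = (\<Sum>j<m. \<phi> (d j) * as!j) * (\<Sum>w\<in>W n. g w)"
    using Suc unfolding m_def W_def g_def by simp
  also have "\<dots> = (\<Sum>j<m. \<Sum>w\<in>W n. \<phi> (d j) * as!j * g w)"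
    by (simp add: sum_distrib_left sum_distrib_right sum.swap[of _ "W n"])
  also have "\<dots> = (\<Sum>j<m. \<Sum>w\<in>W n. g (j#w))"
    unfolding g_def by (simp add: term_id eval_cons)
  also have "\<dots> = (\<Sum>(j,w)\<in>{..<m} \<times> W n. g (j#w))"
    by (simp add: sum.cartesian_product)
  also have "\<dots> = (\<Sum>v\<in>W (Suc n). g v)"
    unfolding Ws by (subst sum.reindex[OF inj]) (simp add: case_prod_unfold)
  finally show ?case unfolding m_def W_def g_def .
qed


lemma cnt_eq:
  "(map (\<lambda>j. count_list w j) [0..<m] = map (\<lambda>j. count_list w0 j) [0..<m])
     \<longleftrightarrow> (\<forall>j<m. count_list w j = count_list w0 j)"
  by (simp add: list_eq_iff_nth_eq)

lemma cnt_sum: "sum_list (map (\<lambda>j. count_list w j) [0..<m]) = (\<Sum>j<m. count_list w j)"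
  by (simp add: sum_list_distinct_conv_sum_set atLeast0LessThan)

lemma power_in_Pn:
  assumes "x \<in> V.span (set as)"
  shows "x ^ n \<in> P_n \<phi> as n"
proof -
  obtain d where x: "x = (\<Sum>j<length as. \<phi> (d j) * as ! j)" using span_list[OF assms] by blast
  define m where "m = length as"
  define W where "W = {w. set w \<subseteq> {..<m} \<and> length w = n}"
  define cnt where "cnt w = map (\<lambda>j. count_list w j) [0..<m]" for w
  define G where "G = {p_eval as is | is. length is = length as \<and> sum_list is = n}"
  define gg where "gg is = (\<Prod>j<m. d j ^ (is!j))" for "is"
  define h where "h w = \<phi> (prod_list (map d w)) * eval_word as w" for w
  have finW: "finite W" unfolding W_def by (rule finite_lists_length_eq) simp
  have xn: "x ^ n = (\<Sum>w\<in>W. h w)"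
    unfolding x power_expand W_def m_def h_def ..
  have pd: "prod_list (map d w) = gg (cnt w)" if "w \<in> W" for w
    using that unfolding W_def gg_def cnt_def
    by (simp add: prod_counts[of w m d])
  have grp: "(\<Sum>w\<in>W. h w) = (\<Sum>is\<in>cnt ` W. \<Sum>w\<in>{w. w \<in> W \<and> cnt w = is}. h w)"
    by (rule sum.group[symmetric]) (use finW in auto)
  have inner: "(\<Sum>w\<in>{w. w \<in> W \<and> cnt w = is}. h w) = \<phi> (gg is) * p_eval as is"
    and mem: "p_eval as is \<in> G"
    if isW: "is \<in> cnt ` W" for "is"
  proof -
    obtain w0 where w0: "w0 \<in> W" "is = cnt w0" using isW by blast
    have seteq: "{w. w \<in> W \<and> cnt w = is} =
       {w. set w \<subseteq> {..<length as} \<and> (\<forall>j<length as. count_list w j = is ! j)}"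
    proof (intro set_eqI iffI)
      fix w assume "w \<in> {w. w \<in> W \<and> cnt w = is}"
      then show "w \<in> {w. set w \<subseteq> {..<length as} \<and> (\<forall>j<length as. count_list w j = is ! j)}"
        using w0 unfolding W_def cnt_def m_def by (auto simp: cnt_eq)
    next
      fix w assume a: "w \<in> {w. set w \<subseteq> {..<length as} \<and> (\<forall>j<length as. count_list w j = is ! j)}"
      then have c: "\<forall>j<m. count_list w j = count_list w0 j"
        using w0 unfolding cnt_def m_def by auto
      have "length w = (\<Sum>j<m. count_list w j)" using a len_counts[of w m] unfolding m_def by auto
      also have "\<dots> = (\<Sum>j<m. count_list w0 j)" using c by simp
      also have "\<dots> = length w0" using w0 len_counts[of w0 m] unfolding W_def by auto
      finally have "length w = n" using w0 unfolding W_def by simp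
      then show "w \<in> {w. w \<in> W \<and> cnt w = is}"
        using a c w0 unfolding W_def cnt_def m_def by (auto simp: cnt_eq)
    qed
    have "(\<Sum>w\<in>{w. w \<in> W \<and> cnt w = is}. h w) = (\<Sum>w\<in>{w. w \<in> W \<and> cnt w = is}. \<phi> (gg is) * eval_word as w)"
      by (rule sum.cong) (auto simp: h_def pd)
    also have "\<dots> = \<phi> (gg is) * p_eval as is"
      unfolding p_eval_def seteq[symmetric] by (simp add: sum_distrib_left)
    finally show "(\<Sum>w\<in>{w. w \<in> W \<and> cnt w = is}. h w) = \<phi> (gg is) * p_eval as is" .
    have "length is = length as" using w0 unfolding cnt_def m_def by simp
    moreover have "sum_list is = n"
      using w0 len_counts[of w0 m] unfolding cnt_def W_def by (simp add: cnt_sum)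
    ultimately show "p_eval as is \<in> G" unfolding G_def by blast
  qed
  have "x ^ n = (\<Sum>is\<in>cnt ` W. \<phi> (gg is) * p_eval as is)"
    unfolding xn grp by (rule sum.cong) (auto simp: inner)
  also have "\<dots> \<in> V.span G"
    by (rule V.span_sum) (auto intro: V.span_scale V.span_base mem)
  finally show ?thesis unfolding P_n_def kspan_eq G_def .
qed


lemma poly_exists:
  assumes "i0 \<le> N" "e i0 \<noteq> 0" "(\<Sum>i\<le>N. \<phi> (e i) * x ^ i) = 0"
  shows "\<exists>q::'k poly. q \<noteq> 0 \<and> degree q \<le> N \<and> poly_eval_alg \<phi> q x = 0"
proof -
  define q where "q = (\<Sum>i\<le>N. monom (e i) i)"
  have cq: "coeff q i = (if i \<le> N then e i else 0)" for i
    unfolding q_def by (simp add: coeff_sum coeff_monom)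
  have "q \<noteq> 0" using assms(1,2) cq[of i0] by auto
  moreover have dq: "degree q \<le> N" by (rule degree_le) (auto simp: cq)
  moreover have "poly_eval_alg \<phi> q x = 0"
  proof -
    have "poly_eval_alg \<phi> q x = (\<Sum>i\<le>N. \<phi> (coeff q i) * x ^ i)"
      unfolding poly_eval_alg_def
      by (rule sum.mono_neutral_left) (use dq in \<open>auto simp: coeff_eq_0 phi0\<close>)
    also have "\<dots> = (\<Sum>i\<le>N. \<phi> (e i) * x ^ i)" by (rule sum.cong) (auto simp: cq)
    finally show ?thesis using assms(3) by simp
  qed
  ultimately show ?thesis by blast
qed

lemma main:
  assumes "fin_dim \<phi> (P_ge0 \<phi> as)"
  shows "\<exists>D::nat. \<forall>x\<in>kspan \<phi> (set as).
           \<exists>q::'k poly. q \<noteq> 0 \<and> degree q \<le> D \<and> poly_eval_alg \<phi> q x = 0"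
proof -
  obtain B where B: "finite B" "B \<subseteq> P_ge0 \<phi> as" "P_ge0 \<phi> as \<subseteq> kspan \<phi> B"
    using assms unfolding fin_dim_def by blast
  show ?thesis
  proof (intro exI[of _ "card B"] ballI)
    fix x assume "x \<in> kspan \<phi> (set as)"
    then have xs: "x \<in> V.span (set as)" by (simp add: kspan_eq)
    have pw: "x ^ i \<in> V.span B" for i
    proof -
      have "x ^ i \<in> P_n \<phi> as i" by (rule power_in_Pn[OF xs])
      then have "x ^ i \<in> P_ge0 \<phi> as"
        unfolding P_ge0_def kspan_eq using V.span_superset by blast
      then show ?thesis using B(3) by (auto simp: kspan_eq)
    qed
    show "\<exists>q::'k poly. q \<noteq> 0 \<and> degree q \<le> card B \<and> poly_eval_alg \<phi> q x = 0"
    proof (cases "inj_on (\<lambda>i. x ^ i) {..card B}")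
      case True
      define S where "S = (\<lambda>i. x ^ i) ` {..card B}"
      have cS: "card S = Suc (card B)" unfolding S_def using card_image[OF True] by simp
      have "V.dependent S"
      proof (rule ccontr)
        assume "\<not> V.dependent S"
        then have "card S \<le> card B"
          using V.independent_span_bound[OF B(1), of S] pw unfolding S_def by auto
        then show False using cS by simp
      qed
      then obtain t u where tu: "finite t" "t \<subseteq> S" "(\<Sum>v\<in>t. \<phi> (u v) * v) = 0" "\<exists>v\<in>t. u v \<noteq> 0"
        unfolding V.dependent_explicit by blast
      then obtain v0 where v0: "v0 \<in> t" "u v0 \<noteq> 0" by blast
      then obtain i0 where i0: "i0 \<le> card B" "v0 = x ^ i0" using tu(2) unfolding S_def by auto
      define e where "e i = (if x ^ i \<in> t then u (x ^ i) else 0)" for i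
      have "(\<Sum>i\<le>card B. \<phi> (e i) * x ^ i) = (\<Sum>v\<in>S. \<phi> (if v \<in> t then u v else 0) * v)"
        unfolding S_def e_def by (simp add: sum.reindex[OF True])
      also have "\<dots> = (\<Sum>v\<in>S. if v \<in> t then \<phi> (u v) * v else 0)"
        by (rule sum.cong) (auto simp: phi0)
      also have "\<dots> = (\<Sum>v\<in>S \<inter> t. \<phi> (u v) * v)"
        by (simp add: sum.inter_restrict S_def)
      also have "S \<inter> t = t" using tu(2) by blast
      finally have "(\<Sum>i\<le>card B. \<phi> (e i) * x ^ i) = 0" using tu(3) by simp
      moreover have "e i0 \<noteq> 0" using v0 i0 unfolding e_def by auto
      ultimately show ?thesis using poly_exists[OF i0(1)] by blast
    next
      case False
      then obtain i j where ij: "i \<le> card B" "j \<le> card B" "i \<noteq> j" "x ^ i = x ^ j"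
        unfolding inj_on_def by auto
      define e :: "nat \<Rightarrow> 'k" where "e k = (if k = i then 1 else if k = j then -1 else 0)" for k
      have "(\<Sum>k\<le>card B. \<phi> (e k) * x ^ k)
          = (\<Sum>k\<le>card B. (if k = i then x ^ i else 0) - (if k = j then x ^ j else 0))"
        by (rule sum.cong) (use ij in \<open>auto simp: e_def phi1 phi0 phiuminus\<close>)
      also have "\<dots> = 0" using ij by (simp add: sum_subtractf)
      finally have "(\<Sum>k\<le>card B. \<phi> (e k) * x ^ k) = 0" .
      moreover have "e i \<noteq> 0" unfolding e_def by simp
      ultimately show ?thesis using poly_exists[OF ij(1)] by blast
    qed
  qed
qed

end

theorem corollary3p7:
  fixes \<phi> :: "'k::field \<Rightarrow> 'a::ring_1" and as :: "'a list"
  assumes "is_k_algebra \<phi>"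
    and "fin_dim \<phi> (P_ge0 \<phi> as)"
  shows "\<exists>D::nat. \<forall>x\<in>kspan \<phi> (set as).
           \<exists>q::'k poly. q \<noteq> 0 \<and> degree q \<le> D \<and> poly_eval_alg \<phi> q x = 0"
  using kalg.main[OF kalg.intro[OF assms(1)] assms(2)] .

end
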